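(* Let $A$ and $B$ be disjoint cubic graphs with $v(A)\equiv 2\pmod 6$ and $v(B)\equiv 4\pmod 6$, let $a=a_1a_2\in E(A)$ and $b=b_1b_2\in E(B)$, and suppose $B-b_1$ has no $\Lambda$-factor. Let $G=AabB$. Then $v(G)\equiv 0\pmod 6$ and $G$ has no $\Lambda$-factor avoiding the edge $a_2b_2$.
   Context: Graphs are finite, undirected, without loops or multiple edges; $v(G)=|V(G)|$. For disjoint graphs $A,B$ with $a=a_1a_2\in E(A)$, $b=b_1b_2\in E(B)$, $AabB$ is obtained from $(A-a)\cup(B-b)$ (edge deletions) by adding the new edges $a_1b_1$ and $a_2b_2$. $B-b_1$ denotes deletion of the vertex $b_1$. A $\Lambda$-factor of a graph is a spanning subgraph each of whose components is a path on 3 vertices; it avoids an edge $e$ if $e$ is not one of its edges. *)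

theory Defs
  imports Main
begin

definition graph :: "'a set \<Rightarrow> 'a set set \<Rightarrow> bool" where
  "graph V E \<longleftrightarrow> finite V \<and> (\<forall>e\<in>E. \<exists>x y. x \<in> V \<and> y \<in> V \<and> x \<noteq> y \<and> e = {x, y})"

definition degree :: "'a set set \<Rightarrow> 'a \<Rightarrow> nat" where
  "degree E v = card {e \<in> E. v \<in> e}"

definition cubic :: "'a set \<Rightarrow> 'a set set \<Rightarrow> bool" where
  "cubic V E \<longleftrightarrow> graph V E \<and> (\<forall>v\<in>V. degree E v = 3)"

definition del_vertex_V :: "'a set \<Rightarrow> 'a \<Rightarrow> 'a set" where
  "del_vertex_V V v = V - {v}"

definition del_vertex_E :: "'a set set \<Rightarrow> 'a \<Rightarrow> 'a set set" where
  "del_vertex_E E v = {e \<in> E. v \<notin> e}"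

definition component :: "'a set set \<Rightarrow> 'a \<Rightarrow> 'a set" where
  "component F v = {u. (\<lambda>x y. {x, y} \<in> F)\<^sup>*\<^sup>* v u}"

definition Lambda_factor :: "'a set \<Rightarrow> 'a set set \<Rightarrow> 'a set set \<Rightarrow> bool" where
  "Lambda_factor V E F \<longleftrightarrow> F \<subseteq> E \<and>
     (\<forall>v\<in>V. \<exists>x y z. distinct [x, y, z] \<and> component F v = {x, y, z} \<and>
        {e \<in> F. e \<subseteq> {x, y, z}} = {{x, y}, {y, z}})"

definition has_Lambda_factor :: "'a set \<Rightarrow> 'a set set \<Rightarrow> bool" where
  "has_Lambda_factor V E \<longleftrightarrow> (\<exists>F. Lambda_factor V E F)"

definition join_V :: "'a set \<Rightarrow> 'a set \<Rightarrow> 'a set" where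
  "join_V VA VB = VA \<union> VB"

definition join_E :: "'a set set \<Rightarrow> 'a \<Rightarrow> 'a \<Rightarrow> 'a \<Rightarrow> 'a \<Rightarrow> 'a set set \<Rightarrow> 'a set set" where
  "join_E EA a1 a2 b1 b2 EB =
     (EA - {{a1, a2}}) \<union> (EB - {{b1, b2}}) \<union> {{a1, b1}, {a2, b2}}"

end

theory Submission
  imports Defs
begin

lemma comp_refl: "v \<in> component F v" by (simp add: component_def)

lemma comp_sym: assumes "u \<in> component F v" shows "v \<in> component F u"
proof -
  have "(\<lambda>x y. {x,y} \<in> F)\<^sup>*\<^sup>* v u" using assms by (simp add: component_def)
  then have "(\<lambda>x y. {x,y} \<in> F)\<^sup>*\<^sup>* u v"
  proof induction
    case base then show ?case by simp
  next
    case (step y z)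
    have "{z,y} \<in> F" using step(2) by (simp add: insert_commute)
    then show ?case using step(3) by (simp add: converse_rtranclp_into_rtranclp)
  qed
  then show ?thesis by (simp add: component_def)
qed

lemma comp_trans: "u \<in> component F v \<Longrightarrow> w \<in> component F u \<Longrightarrow> w \<in> component F v"
  by (auto simp: component_def intro: rtranclp_trans)

lemma comp_eq: assumes "u \<in> component F v" shows "component F u = component F v"
proof
  show "component F u \<subseteq> component F v"
  proof
    fix w assume "w \<in> component F u"
    then show "w \<in> component F v" using comp_trans[OF assms] by simp
  qed
  show "component F v \<subseteq> component F u"
  proof
    fix w assume "w \<in> component F v"
    then show "w \<in> component F u" using comp_trans[OF comp_sym[OF assms]] by simp
  qed
qed

lemma comp_step: "{u,w} \<in> F \<Longrightarrow> u \<in> component F v \<Longrightarrow> w \<in> component F v"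
  by (auto simp: component_def intro: rtranclp.rtrancl_into_rtrancl)

lemma count3:
  assumes "finite S" "\<forall>v\<in>S. card (component F v) = 3 \<and> component F v \<subseteq> S"
  shows "card S mod 3 = 0"
proof -
  let ?C = "component F ` S"
  have U: "\<Union>?C = S"
  proof
    show "\<Union>?C \<subseteq> S" using assms(2) by auto
    show "S \<subseteq> \<Union>?C"
    proof
      fix v assume "v \<in> S"
      then have "component F v \<in> ?C" by simp
      moreover have "v \<in> component F v" by (rule comp_refl)
      ultimately show "v \<in> \<Union>?C" by (rule UnionI)
    qed
  qed
  have "3 * card ?C = card (\<Union>?C)"
  proof (rule card_partition)
    show "finite ?C" using assms(1) by simp
    show "finite (\<Union>?C)" using U assms(1) by simp
    show "card c = 3" if "c \<in> ?C" for c using assms(2) that by auto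
    show "c1 \<inter> c2 = {}" if c1C: "c1 \<in> ?C" and c2C: "c2 \<in> ?C" and ne: "c1 \<noteq> c2" for c1 c2
    proof -
      obtain v1 v2 where c1: "c1 = component F v1" and c2: "c2 = component F v2" using c1C c2C by blast
      show "c1 \<inter> c2 = {}"
      proof (rule ccontr)
        assume "c1 \<inter> c2 \<noteq> {}"
        then obtain w where "w \<in> c1" "w \<in> c2" by blast
        then have "component F w = c1" "component F w = c2"
          using comp_eq c1 c2 by simp_all
        then show False using ne by simp
      qed
    qed
  qed
  then have "card S = 3 * card ?C" using U by simp
  then show ?thesis by simp
qed

theorem mainTheorem12:
  fixes VA VB :: "'a set" and EA EB :: "'a set set" and a1 a2 b1 b2 :: 'a
  assumes "cubic VA EA" and "cubic VB EB" and "VA \<inter> VB = {}"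
    and "card VA mod 6 = 2" and "card VB mod 6 = 4"
    and "{a1, a2} \<in> EA" and "{b1, b2} \<in> EB"
    and "\<not> has_Lambda_factor (del_vertex_V VB b1) (del_vertex_E EB b1)"
  shows "card (join_V VA VB) mod 6 = 0 \<and>
    \<not> (\<exists>F. Lambda_factor (join_V VA VB) (join_E EA a1 a2 b1 b2 EB) F \<and> {a2, b2} \<notin> F)"
proof -
  have fA: "finite VA" and fB: "finite VB" using assms(1,2) by (auto simp: cubic_def graph_def)
  have gA: "\<forall>e\<in>EA. \<exists>x y. x \<in> VA \<and> y \<in> VA \<and> x \<noteq> y \<and> e = {x, y}"
    using assms(1) by (simp add: cubic_def graph_def)
  have gB: "\<forall>e\<in>EB. \<exists>x y. x \<in> VB \<and> y \<in> VB \<and> x \<noteq> y \<and> e = {x, y}"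
    using assms(2) by (simp add: cubic_def graph_def)
  have eA: "\<forall>e\<in>EA. e \<subseteq> VA \<and> e \<noteq> {}" using gA by fastforce
  have eB: "\<forall>e\<in>EB. e \<subseteq> VB \<and> e \<noteq> {}" using gB by fastforce
  have eAs: "e \<subseteq> VA" if "e \<in> EA" for e using eA that by simp
  have eBs: "e \<subseteq> VB" if "e \<in> EB" for e using eB that by simp
  have eA0: "e \<noteq> {}" if "e \<in> EA" for e using eA that by simp
  have a12: "a1 \<in> VA" "a2 \<in> VA" using eA assms(6) by auto
  have b12: "b1 \<in> VB" "b2 \<in> VB" using eB assms(7) by auto
  have a1nB: "a1 \<notin> VB" using a12 assms(3) by blast
  have cardB: "card VB mod 3 = 1" using assms(5) by presburger
  have "card (VA \<union> VB) = card VA + card VB" using fA fB assms(3) by (simp add: card_Un_disjoint)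
  then have P1: "card (join_V VA VB) mod 6 = 0" using assms(4,5) unfolding join_V_def by presburger
  have P2: "\<not> (\<exists>F. Lambda_factor (join_V VA VB) (join_E EA a1 a2 b1 b2 EB) F \<and> {a2, b2} \<notin> F)"
  proof
    assume "\<exists>F. Lambda_factor (join_V VA VB) (join_E EA a1 a2 b1 b2 EB) F \<and> {a2, b2} \<notin> F"
    then obtain F where LF: "Lambda_factor (VA \<union> VB) (join_E EA a1 a2 b1 b2 EB) F"
      and na: "{a2, b2} \<notin> F" unfolding join_V_def by blast
    have Fsub: "F \<subseteq> join_E EA a1 a2 b1 b2 EB" using LF by (simp add: Lambda_factor_def)
    have fac: "\<forall>v\<in>VA \<union> VB. \<exists>x y z. distinct [x, y, z] \<and> component F v = {x, y, z} \<and>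
        {e \<in> F. e \<subseteq> {x, y, z}} = {{x, y}, {y, z}}" using LF by (simp add: Lambda_factor_def)
    have card3: "card (component F v) = 3" if "v \<in> VB" for v
    proof -
      have vV: "v \<in> VA \<union> VB" using that by simp
      obtain x y z where "distinct [x, y, z]" "component F v = {x, y, z}" using bspec[OF fac vV] by blast
      then show ?thesis by simp
    qed
    have stepB: "w \<in> VB" if "u \<in> VB" "{u,w} \<in> F" "{u,w} \<noteq> {a1,b1}" for u w
    proof -
      have "{u,w} \<in> join_E EA a1 a2 b1 b2 EB" using that(2) Fsub by (rule subsetD[rotated])
      then have D: "{u,w} \<in> EA \<or> {u,w} \<in> EB \<or> {u,w} = {a1,b1} \<or> {u,w} = {a2,b2}"
        unfolding join_E_def by auto
      have nEA: "{u,w} \<notin> EA"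
      proof
        assume "{u,w} \<in> EA"
        then have "u \<in> VA" using eAs[of "{u,w}"] by simp
        then show False using that(1) assms(3) by blast
      qed
      have nA2: "{u,w} \<noteq> {a2,b2}" using na that(2) by auto
      have "{u,w} \<in> EB" by (meson D nEA nA2 that(3))
      then show ?thesis using eBs by auto
    qed
    show False
    proof (cases "{a1,b1} \<in> F")
      case False
      have clos: "u \<in> VB" if "(\<lambda>x y. {x,y} \<in> F)\<^sup>*\<^sup>* v u" "v \<in> VB" for v u
        using that(1,2)
      proof induction
        case base then show ?case .
      next
        case (step y z)
        have yB: "y \<in> VB" using step by blast
        have ne: "{y,z} \<noteq> {a1,b1}"
        proof
          assume "{y,z} = {a1,b1}"
          then show False using step(2) False by simp
        qed
        show ?case using stepB[OF yB step(2) ne] .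
      qed
      have closV: "component F v \<subseteq> VB" if "v \<in> VB" for v
        using clos that unfolding component_def by blast
      have "card VB mod 3 = 0"
      proof (rule count3[OF fB])
        show "\<forall>v\<in>VB. card (component F v) = 3 \<and> component F v \<subseteq> VB"
          using card3 closV by blast
      qed
      then show False using cardB by simp
    next
      case True
      define C where "C = component F b1"
      define S where "S = VB - C"
      have b1C: "b1 \<in> C" unfolding C_def by (rule comp_refl)
      have "{b1,a1} \<in> F" using True by (simp add: insert_commute)
      then have a1C: "a1 \<in> C" unfolding C_def using comp_step comp_refl by fast
      have clos: "u \<in> S" if "(\<lambda>x y. {x,y} \<in> F)\<^sup>*\<^sup>* v u" "v \<in> S" for v u
        using that(1,2)
      proof induction
        case base then show ?case .
      next
        case (step y z)
        have yS: "y \<in> S" using step by blast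
        have "z \<notin> C"
        proof
          assume "z \<in> C"
          have "{z,y} \<in> F" using step(2) by (simp add: insert_commute)
          then have "y \<in> C" using comp_step[OF \<open>{z,y} \<in> F\<close>, of b1] \<open>z \<in> C\<close> unfolding C_def by simp
          then show False using yS unfolding S_def by blast
        qed
        moreover have "{y,z} \<noteq> {a1,b1}"
          using yS a1nB b1C unfolding S_def by (auto simp: doubleton_eq_iff)
        moreover have "y \<in> VB" using yS unfolding S_def by blast
        ultimately have "z \<in> VB" "z \<notin> C" using stepB[of y z] step(2) by auto
        then show ?case unfolding S_def by blast
      qed
      have closS: "component F v \<subseteq> S" if "v \<in> S" for v
        using clos that unfolding component_def by blast
      have SB: "S \<subseteq> VB" unfolding S_def by blast
      have fS: "finite S" using fB SB finite_subset by blast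
      have S3: "card S mod 3 = 0" proof (rule count3[OF fS])
        show "\<forall>v\<in>S. card (component F v) = 3 \<and> component F v \<subseteq> S"
          using closS card3 SB by blast
      qed
      have cC: "card C = 3" using card3[OF b12(1)] unfolding C_def .
      have fC: "finite C" using cC card.infinite by fastforce
      have cS: "card S = card VB - card (VB \<inter> C)" unfolding S_def
        by (rule card_Diff_subset_Int) (simp add: fC)
      have le: "card (VB \<inter> C) \<le> card VB" using fB by (simp add: card_mono)
      have sub2: "VB \<inter> C \<subseteq> C - {a1}" using a1nB by blast
      have "card (C - {a1}) = 2" using cC a1C fC by simp
      then have le2: "card (VB \<inter> C) \<le> 2" using card_mono[OF _ sub2] fC by simp
      have "VB \<inter> C \<noteq> {}" using b1C b12 by blast
      then have ge1: "card (VB \<inter> C) \<ge> 1" using card_gt_0_iff[of "VB \<inter> C"] fC by simp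
      have c1: "card (VB \<inter> C) = 1"
      proof (rule ccontr)
        assume "card (VB \<inter> C) \<noteq> 1"
        then have "card (VB \<inter> C) = 2" using le2 ge1 by linarith
        then show False using S3 cS le cardB by presburger
      qed
      then obtain c where "VB \<inter> C = {c}" by (meson card_1_singletonE)
      moreover have "b1 \<in> VB \<inter> C" using b1C b12 by blast
      ultimately have VBC: "VB \<inter> C = {b1}" by simp
      have Seq: "S = VB - {b1}" unfolding S_def using VBC by blast
      define F' where "F' = {e \<in> F. e \<subseteq> S}"
      have F'sub: "F' \<subseteq> del_vertex_E EB b1"
      proof
        fix e assume "e \<in> F'"
        then have eF: "e \<in> F" and eS: "e \<subseteq> S" unfolding F'_def by auto
        have "e \<notin> EA"
        proof
          assume "e \<in> EA"
          then have "e \<subseteq> VA" "e \<noteq> {}" using eAs eA0 by auto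
          then obtain q where "q \<in> e" by blast
          then show False using eS SB assms(3) \<open>e \<subseteq> VA\<close> by auto
        qed
        moreover have "e \<noteq> {a1,b1}"
        proof
          assume "e = {a1,b1}"
          then have "a1 \<in> VB" using eS SB by auto
          then show False using a1nB by simp
        qed
        moreover have "e \<noteq> {a2,b2}" using na eF by metis
        moreover have J: "e \<in> join_E EA a1 a2 b1 b2 EB" using eF Fsub by (rule subsetD[rotated])
        moreover from J have "e \<in> EA \<or> e \<in> EB \<or> e = {a1,b1} \<or> e = {a2,b2}"
          unfolding join_E_def by auto
        ultimately have eEB: "e \<in> EB" by metis
        have "b1 \<notin> e" using eS Seq by blast
        then show "e \<in> del_vertex_E EB b1" using eEB unfolding del_vertex_E_def by simp
      qed
      have compeq: "component F' v = component F v" if vS: "v \<in> S" for v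
      proof
        show "component F' v \<subseteq> component F v"
        proof
          fix u assume "u \<in> component F' v"
          then have "(\<lambda>x y. {x,y} \<in> F')\<^sup>*\<^sup>* v u" unfolding component_def by simp
          then have "(\<lambda>x y. {x,y} \<in> F)\<^sup>*\<^sup>* v u"
          proof induction
            case base then show ?case by simp
          next
            case (step y z) then show ?case unfolding F'_def
              by (simp add: rtranclp.rtrancl_into_rtrancl)
          qed
          then show "u \<in> component F v" unfolding component_def by simp
        qed
      next
        show "component F v \<subseteq> component F' v"
        proof
          fix u assume "u \<in> component F v"
          then have "(\<lambda>x y. {x,y} \<in> F)\<^sup>*\<^sup>* v u" unfolding component_def by simp
          then have "(\<lambda>x y. {x,y} \<in> F')\<^sup>*\<^sup>* v u"
          proof induction
            case base then show ?case by simp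
          next
            case (step y z)
            have "y \<in> S" using clos[OF step(1) vS] .
            moreover have "z \<in> S" using clos step(1,2) vS
              by (meson rtranclp.rtrancl_into_rtrancl)
            ultimately have "{y,z} \<in> F'" using step(2) unfolding F'_def by simp
            then show ?case using step(3) by (simp add: rtranclp.rtrancl_into_rtrancl)
          qed
          then show "u \<in> component F' v" unfolding component_def by simp
        qed
      qed
      have "Lambda_factor (del_vertex_V VB b1) (del_vertex_E EB b1) F'"
        unfolding Lambda_factor_def
      proof (intro conjI ballI)
        show "F' \<subseteq> del_vertex_E EB b1" by (rule F'sub)
        fix v assume "v \<in> del_vertex_V VB b1"
        then have vS: "v \<in> S" using Seq unfolding del_vertex_V_def by simp
        then obtain x y z where xyz: "distinct [x, y, z]" "component F v = {x, y, z}"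
          "{e \<in> F. e \<subseteq> {x, y, z}} = {{x, y}, {y, z}}" using bspec[OF fac, of v] SB vS by (meson UnI2 subsetD)
        have XS: "{x,y,z} \<subseteq> S" using closS[OF vS] xyz(2) by simp
        then have Feq: "{e \<in> F'. e \<subseteq> {x, y, z}} = {e \<in> F. e \<subseteq> {x, y, z}}"
          unfolding F'_def using subset_trans[OF _ XS] by auto
        show "\<exists>x y z. distinct [x, y, z] \<and> component F' v = {x, y, z} \<and>
          {e \<in> F'. e \<subseteq> {x, y, z}} = {{x, y}, {y, z}}"
          apply (rule exI[of _ x], rule exI[of _ y], rule exI[of _ z])
          using xyz compeq[OF vS] Feq by simp
      qed
      then have "has_Lambda_factor (del_vertex_V VB b1) (del_vertex_E EB b1)"
        unfolding has_Lambda_factor_def by blast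
      then show False using assms(8) by simp
    qed
  qed
  show ?thesis using P1 P2 by blast
qed

end
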